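(* Let $j = \pm 1$ and let $n$ and $r$ be positive integers. Define \[ \mu_{n} = \prod_{p \mid n,\ p \text{ prime}} p^{1/(p-1)}. \] Then the coefficients of the polynomial \[ \binom{2r}{r}\, {}_{2}F_{1}\!\left(-r,-r+j/n;-2r;n\mu_{n}X\right) \] are algebraic integers.
   Context: ${}_{2}F_{1}(a,b;c;X) = \sum_{s\geq0}\frac{(a)_{s}(b)_{s}}{(c)_{s}\,s!}X^{s}$ with $(y)_{s} = y(y+1)\cdots(y+s-1)$; with $a=-r$ and $c=-2r$ this is the polynomial $\sum_{s=0}^{r}\frac{(-r)_{s}(-r+j/n)_{s}}{(-2r)_{s}\,s!}X^{s}$. *)

theory Defs
  imports "HOL-Computational_Algebra.Computational_Algebra"
begin


definition mu :: "nat \<Rightarrow> real" where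
  "mu n = (\<Prod>p\<in>prime_factors n. real p powr (1 / (real p - 1)))"

definition hyp2F1_poly :: "nat \<Rightarrow> real \<Rightarrow> real poly" where
  "hyp2F1_poly r b = (\<Sum>s\<le>r. monom (pochhammer (- real r) s * pochhammer b s
       / (pochhammer (- 2 * real r) s * fact s)) s)"

end

theory Submission imports Defs "HOL-Number_Theory.Cong" begin

lemma pw_alg:
  assumes "L > 0" "(x::real)^L \<in> \<int>"
  shows "algebraic_int x"
proof (rule algebraic_int_root[where y = "x^L" and p = "monom 1 L"])
  from assms(2) obtain m where "x^L = of_int m" by (auto elim: Ints_cases)
  thus "algebraic_int (x^L)" by simp
qed (use assms in \<open>auto simp: poly_monom degree_monom_eq coeff_monom\<close>)

lemma pw_mult:
  assumes "\<exists>L>0. (x::real)^L \<in> \<int>" "\<exists>L>0. y^L \<in> \<int>"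
  shows "\<exists>L>0. (x*y)^L \<in> \<int>"
proof -
  obtain a b where ab: "a > 0" "b > 0" "x^a \<in> \<int>" "y^b \<in> \<int>" using assms by blast
  have "(x*y)^(a*b) = (x^a)^b * (y^b)^a"
    unfolding power_mult_distrib power_mult[symmetric] by (simp add: mult.commute)
  also have "\<dots> \<in> \<int>" using ab by (intro Ints_mult Ints_power[of "x^a"] Ints_power[of "y^b"])
  finally show ?thesis using ab by (intro exI[of _ "a*b"]) auto
qed

lemma pw_power:
  assumes "\<exists>L>0. (x::real)^L \<in> \<int>"
  shows "\<exists>L>0. (x^k)^L \<in> \<int>"
proof -
  obtain a where a: "a > 0" "x^a \<in> \<int>" using assms by blast
  have "(x^k)^a = (x^a)^k" by (simp add: power_mult[symmetric] mult.commute)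
  thus ?thesis using a by (intro exI[of _ a]) auto
qed

lemma pw_prod:
  assumes "finite F" "\<forall>p\<in>F. \<exists>L>0. (f p::real)^L \<in> \<int>"
  shows "\<exists>L>0. (prod f F)^L \<in> \<int>"
  using assms
proof (induction F rule: finite_induct)
  case empty then show ?case by (intro exI[of _ 1]) auto
next
  case (insert x F) then show ?case by (simp add: pw_mult)
qed

fun ds :: "nat \<Rightarrow> nat \<Rightarrow> nat" where
  "ds p m = (if m = 0 \<or> p < 2 then 0 else m mod p + ds p (m div p))"

declare ds.simps[simp del]

lemma ds_eq: "p \<ge> 2 \<Longrightarrow> ds p x = x mod p + ds p (x div p)"
  by (cases "x = 0") (simp_all add: ds.simps[of p x] ds.simps[of p 0])

lemma ds_step:
  assumes "prime p"
  shows "m \<ge> 1 \<Longrightarrow> ds p m + (p-1)*multiplicity p m = ds p (m-1) + 1"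
proof (induction m rule: less_induct)
  case (less m)
  have p2: "p \<ge> 2" using assms prime_ge_2_nat by blast
  show ?case
  proof (cases "p dvd m")
    case False
    hence mu0: "multiplicity p m = 0" by (rule not_dvd_imp_multiplicity_0)
    obtain m' where m': "m = Suc m'" using less.prems by (cases m) auto
    have "m mod p = (m-1) mod p + 1" "m div p = (m-1) div p"
      using False unfolding m' by (auto simp: mod_Suc div_Suc dvd_eq_mod_eq_0)
    then show ?thesis using ds_eq[OF p2, of m] ds_eq[OF p2, of "m-1"] mu0 by simp
  next
    case True
    then obtain q where q: "m = p*q" by blast
    have q1: "q \<ge> 1" using q less.prems by (cases q) auto
    have qm: "q < m" using q q1 p2 by simp
    have mm: "multiplicity p m = Suc (multiplicity p q)"
      using q multiplicity_times_same[of q p] p2 q1 by simp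
    have e: "m - 1 = p*(q-1) + (p-1)" using q q1 p2
      by (cases q) (auto simp: algebra_simps)
    have p0: "p \<noteq> 0" using p2 by simp
    have "(m-1) mod p = p - 1" unfolding e mod_mult_self4 using p2 by simp
    moreover have "(m-1) div p = q - 1" unfolding e div_mult_self4[OF p0] using p2 by simp
    moreover have "m mod p = 0" "m div p = q" using q p2 by simp_all
    ultimately have d1: "ds p m = ds p q" and d2: "ds p (m-1) = (p-1) + ds p (q-1)"
      using ds_eq[OF p2, of m] ds_eq[OF p2, of "m-1"] by simp_all
    have ms: "(p-1)*multiplicity p m = (p-1)*multiplicity p q + (p-1)" unfolding mm by simp
    show ?thesis using d1 d2 ms less.IH[OF qm q1] by linarith
  qed
qed

lemma legendre:
  assumes "prime p"
  shows "ds p s + (p-1)*multiplicity p (fact s :: nat) = s"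
proof (induction s)
  case 0 then show ?case by (simp add: ds.simps)
next
  case (Suc s)
  have "multiplicity p (fact (Suc s) :: nat) = multiplicity p (Suc s) + multiplicity p (fact s :: nat)"
  proof -
    have "(fact (Suc s) :: nat) = Suc s * fact s" by simp
    also have "multiplicity p \<dots> = multiplicity p (Suc s) + multiplicity p (fact s :: nat)"
      by (rule prime_elem_multiplicity_mult_distrib) (use assms in auto)
    finally show ?thesis .
  qed
  then show ?case using ds_step[OF assms, of "Suc s"] Suc by (simp add: algebra_simps)
qed


lemma coeff_pcompose_lin: "coeff (pcompose p [:0, c:]) i = coeff p i * (c::real)^i"
proof (induction p arbitrary: i)
  case 0 then show ?case by simp
next
  case (pCons a p)
  have "pcompose (pCons a p) [:0, c:] = [:a:] + pCons 0 (smult c (pcompose p [:0, c:]))"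
    by (simp add: pcompose_pCons)
  then show ?case using pCons.IH by (cases i) (auto simp: coeff_pCons algebra_simps)
qed

lemma coeff_hyp: "coeff (hyp2F1_poly r b) i = (if i \<le> r then
   pochhammer (- real r) i * pochhammer b i / (pochhammer (- 2 * real r) i * fact i) else 0)"
  unfolding hyp2F1_poly_def coeff_sum coeff_monom by (auto simp: sum.delta)

lemma binom_step:
  "s \<le> r \<Longrightarrow> real ((2*r) choose r) * pochhammer (- real r) s / pochhammer (- 2 * real r) s
     = real ((2*r - s) choose r)"
proof (induction s)
  case 0 then show ?case by simp
next
  case (Suc s)
  have sr: "s < r" using Suc by simp
  have nz: "pochhammer (- 2 * real r) s \<noteq> 0"
    using sr by (auto simp: pochhammer_eq_0_iff)
  have d: "- 2 * real r + real s \<noteq> 0" using sr by simp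
  have ab: "real (r - s) * real ((2*r - s) choose r) = real (2*r - s) * real ((2*r - s - 1) choose r)"
    using binomial_absorb_comp[of "2*r - s" r] sr
    by (metis (mono_tags, lifting) diff_diff_left mult_2 add_diff_cancel_left' diff_commute of_nat_mult)
  have "real ((2*r) choose r) * pochhammer (- real r) (Suc s) / pochhammer (- 2 * real r) (Suc s)
      = (real ((2*r) choose r) * pochhammer (- real r) s / pochhammer (- 2 * real r) s)
        * ((- real r + real s) / (- 2 * real r + real s))"
    using nz d by (simp add: pochhammer_Suc field_simps)
  also have "\<dots> = real ((2*r - s) choose r) * (real (r - s) / real (2*r - s))"
    using Suc sr by (simp add: of_nat_diff) (simp add: field_simps)
  also have "\<dots> = real ((2*r - Suc s) choose r)"
    using ab sr by (simp add: field_simps)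
  finally show ?case .
qed

lemma poch_int:
  assumes "n > 0"
  shows "real n ^ s * pochhammer (- real r + real_of_int j / real n) s
       = real_of_int (\<Prod>k<s. (j - int r * int n + int n * int k))"
proof -
  have "real n ^ s * pochhammer (- real r + real_of_int j / real n) s
     = (\<Prod>k<s. real n * (- real r + real_of_int j / real n + real k))"
    by (simp add: pochhammer_prod prod.distrib lessThan_atLeast0)
  also have "\<dots> = (\<Prod>k<s. real_of_int (j - int r * int n + int n * int k))"
    using assms by (intro prod.cong) (auto simp: field_simps)
  finally show ?thesis by simp
qed

lemma g_pow:
  assumes "prime (p::nat)"
  shows "(real p powr (1 / (real p - 1))) ^ (p - 1) = real p"
proof -
  have p2: "p \<ge> 2" using assms prime_ge_2_nat by blast
  have "(real p powr (1 / (real p - 1))) ^ (p - 1) = (real p powr (1 / (real p - 1))) powr real (p - 1)"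
    using p2 by (subst powr_realpow) auto
  also have "\<dots> = real p powr 1" using p2 by (simp add: powr_powr of_nat_diff)
  finally show ?thesis using p2 by simp
qed


lemma fact_split:
  assumes "n > 0"
  obtains A B :: nat where "fact s = A * B" "coprime B n"
    "A = (\<Prod>p\<in>prime_factors n. p ^ multiplicity p (fact s :: nat))"
proof -
  define S where "S = prime_factors (fact s :: nat)"
  define N where "N = prime_factors n"
  define f where "f p = p ^ multiplicity p (fact s :: nat)" for p :: nat
  have "prod f S = normalize (fact s :: nat)"
    unfolding S_def f_def by (rule prod_prime_factors) simp
  hence "(fact s :: nat) = prod f S" by simp
  also have "\<dots> = prod f (S \<inter> N) * prod f (S - N)"
    by (rule prod.Int_Diff) (simp add: S_def)
  also have "prod f (S \<inter> N) = prod f N"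
  proof (rule prod.mono_neutral_left)
    show "finite N" by (simp add: N_def)
    show "\<forall>i\<in>N - S \<inter> N. f i = 1"
    proof
      fix p assume "p \<in> N - S \<inter> N"
      hence "p \<notin> prime_factors (fact s :: nat)" "prime p" by (auto simp: S_def N_def)
      hence "\<not> p dvd (fact s :: nat)" using in_prime_factors_iff[of p "fact s :: nat"] by simp
      thus "f p = 1" by (simp add: f_def not_dvd_imp_multiplicity_0)
    qed
  qed auto
  finally have e: "(fact s :: nat) = prod f N * prod f (S - N)" .
  have cop: "coprime (prod f (S - N)) n"
  proof (rule prod_coprime_left)
    fix p assume "p \<in> S - N"
    hence "prime p" "\<not> p dvd n" using assms in_prime_factors_iff[of p n] by (auto simp: S_def N_def)
    hence "coprime p n" by (simp add: prime_imp_coprime)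
    thus "coprime (f p) n" by (simp add: f_def)
  qed
  have A: "prod f N = (\<Prod>p\<in>prime_factors n. p ^ multiplicity p (fact s :: nat))"
    unfolding N_def by (rule prod.cong[OF refl]) (simp only: f_def)
  show ?thesis by (rule that[OF e cop A])
qed

lemma B_dvd:
  fixes B n :: nat and a :: int
  assumes "coprime B n" "B dvd fact s"
  shows "int B dvd (\<Prod>k<s. a + int n * int k)"
proof -
  have "coprime (int n) (int B)" using assms(1) by (simp add: coprime_commute)
  then obtain n' where n': "[int n * n' = 1] (mod int B)" using cong_solve_coprime_int by blast
  have c: "[a + int n * int k = int n * (a * n' + int k)] (mod int B)" for k
  proof -
    have "[a * (int n * n') = a * 1] (mod int B)" by (rule cong_mult[OF cong_refl n'])
    hence "[a * (int n * n') + int n * int k = a * 1 + int n * int k] (mod int B)"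
      by (rule cong_add[OF _ cong_refl])
    hence "[int n * (a * n' + int k) = a + int n * int k] (mod int B)"
      by (simp add: algebra_simps)
    thus ?thesis by (rule cong_sym)
  qed
  have cp: "[(\<Prod>k<s. a + int n * int k) = (\<Prod>k<s. int n * (a * n' + int k))] (mod int B)"
    by (intro cong_prod c)
  have eq: "(\<Prod>k<s. int n * (a * n' + int k)) = int n ^ s * pochhammer (a * n') s"
    by (simp add: pochhammer_prod prod.distrib lessThan_atLeast0)
  have dv: "int B dvd int n ^ s * pochhammer (a * n') s"
  proof -
    have "int B dvd int (fact s)" using assms(2) by (subst of_nat_dvd_iff)
    hence "int B dvd fact s" by (simp only: of_nat_fact)
    also have "fact s dvd pochhammer (a * n') s" by (rule fact_dvd_pochhammer)
    finally show ?thesis by (rule dvd_mult)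
  qed
  show ?thesis using cong_dvd_iff[OF cp] eq dv by metis
qed


lemma main_s:
  fixes j :: int and n r s :: nat
  assumes "n > 0" "s \<le> r"
  shows "algebraic_int (real ((2*r) choose r) * (pochhammer (- real r) s
     * pochhammer (- real r + real_of_int j / real n) s / (pochhammer (- 2 * real r) s * fact s))
     * (real n * mu n)^s)"
proof -
  define b where "b = - real r + real_of_int j / real n"
  define P where "P = (\<Prod>k<s. (j - int r * int n) + int n * int k)"
  obtain A B where AB: "fact s = A*B" "coprime B n"
      "A = (\<Prod>p\<in>prime_factors n. p ^ multiplicity p (fact s :: nat))"
    using fact_split[OF assms(1), where s=s] by blast
  have "B dvd fact s" using AB(1) by simp
  hence "int B dvd P" unfolding P_def by (rule B_dvd[OF AB(2)])
  then obtain Q where PQ: "P = int B * Q" by (elim dvdE)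
  define g where "g p = real p powr (1 / (real p - 1))" for p :: nat
  define e where "e p = multiplicity p (fact s :: nat)" for p
  define t where "t p = s - (p-1) * e p" for p
  have gt: "g p ^ s / real p ^ e p = g p ^ t p" if "prime p" for p
  proof -
    have le: "(p-1)*e p \<le> s" using legendre[OF that, of s] unfolding e_def by linarith
    have "g p ^ s = g p ^ (t p + (p-1) * e p)" unfolding t_def using le by simp
    also have "\<dots> = g p ^ t p * (g p ^ (p-1)) ^ e p" by (simp add: power_add power_mult)
    also have "g p ^ (p-1) = real p" using g_pow[OF that] by (simp add: g_def)
    finally show ?thesis using that prime_gt_0_nat[OF that] by simp
  qed
  have mu_eq: "mu n = (\<Prod>p\<in>prime_factors n. g p)" by (simp add: mu_def g_def)
  have B0: "B > 0" using AB(1) by (metis fact_nonzero mult_0_right neq0_conv)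
  have A_real: "real A = (\<Prod>p\<in>prime_factors n. real p ^ e p)" using AB(3) by (simp add: e_def)
  have fs: "(fact s :: real) = real A * real B" using AB(1) by (metis of_nat_fact of_nat_mult)
  have "real ((2*r) choose r) * (pochhammer (- real r) s
     * pochhammer (- real r + real_of_int j / real n) s / (pochhammer (- 2 * real r) s * fact s))
     * (real n * mu n)^s
     = (real ((2*r) choose r) * pochhammer (- real r) s / pochhammer (- 2 * real r) s)
       * (real n ^ s * pochhammer b s) / fact s * mu n ^ s"
    by (simp add: b_def power_mult_distrib)
  also have "\<dots> = real ((2*r - s) choose r) * real_of_int P / fact s * mu n ^ s"
    using binom_step[OF assms(2)] poch_int[OF assms(1), of s r j] by (simp add: b_def P_def)
  also have "\<dots> = real ((2*r - s) choose r) * real_of_int Q * (mu n ^ s / real A)"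
    using B0 by (simp add: PQ fs)
  also have "mu n ^ s / real A = (\<Prod>p\<in>prime_factors n. g p ^ s / real p ^ e p)"
    by (simp add: mu_eq A_real prod_dividef prod_power_distrib)
  also have "\<dots> = (\<Prod>p\<in>prime_factors n. g p ^ t p)"
    by (intro prod.cong refl gt) auto
  finally have eq: "real ((2*r) choose r) * (pochhammer (- real r) s
     * pochhammer (- real r + real_of_int j / real n) s / (pochhammer (- 2 * real r) s * fact s))
     * (real n * mu n)^s = real ((2*r - s) choose r) * real_of_int Q * (\<Prod>p\<in>prime_factors n. g p ^ t p)" .
  have "\<exists>L>0. (real ((2*r - s) choose r) * real_of_int Q * (\<Prod>p\<in>prime_factors n. g p ^ t p)) ^ L \<in> \<int>"
  proof (rule pw_mult)
    show "\<exists>L>0. (real ((2*r - s) choose r) * real_of_int Q) ^ L \<in> \<int>"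
      by (intro exI[of _ 1]) auto
    show "\<exists>L>0. (\<Prod>p\<in>prime_factors n. g p ^ t p) ^ L \<in> \<int>"
    proof (rule pw_prod)
      show "\<forall>p\<in>prime_factors n. \<exists>L>0. (g p ^ t p) ^ L \<in> \<int>"
      proof
        fix p assume "p \<in> prime_factors n"
        hence pp: "prime p" by auto
        have "p - 1 > 0" using prime_ge_2_nat[OF pp] by simp
        moreover have "g p ^ (p - 1) \<in> \<int>" using g_pow[OF pp] by (simp add: g_def)
        ultimately show "\<exists>L>0. (g p ^ t p) ^ L \<in> \<int>" by (intro pw_power) blast
      qed
    qed auto
  qed
  then obtain L where "L > 0" "(real ((2*r - s) choose r) * real_of_int Q * (\<Prod>p\<in>prime_factors n. g p ^ t p)) ^ L \<in> \<int>"
    by blast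
  then show ?thesis unfolding eq by (rule pw_alg)
qed

theorem lemma2p4:
  fixes j :: int and n r :: nat
  assumes "j = 1 \<or> j = -1" and "n > 0" and "r > 0"
  shows "\<forall>i. algebraic_int (coeff (smult (real ((2 * r) choose r))
            (pcompose (hyp2F1_poly r (- real r + real_of_int j / real n))
                      [:0, real n * mu n:])) i)"
proof
  fix i
  show "algebraic_int (coeff (smult (real ((2 * r) choose r))
            (pcompose (hyp2F1_poly r (- real r + real_of_int j / real n))
                      [:0, real n * mu n:])) i)"
  proof (cases "i \<le> r")
    case True
    then show ?thesis using main_s[OF assms(2) True, of j]
      by (simp add: coeff_hyp coeff_pcompose_lin mult.assoc)
  next
    case False
    then show ?thesis by (simp add: coeff_hyp coeff_pcompose_lin)
  qed
qed

end
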